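(* The function $t\mapsto \frac1t-M(t)$ is positive and decreasing on $(0,\infty)$.
   Context: For $t>0$, $M(t)=\int_0^\infty \frac{e^{-tu}}{\sqrt{u^2+1}}\,du$. *)

theory Defs
  imports "HOL-Analysis.Analysis"
begin

definition M :: "real \<Rightarrow> real" where
  "M t = integral {0..} (\<lambda>u. exp (- t * u) / sqrt (u\<^sup>2 + 1))"

end

theory Submission
  imports Defs
begin

lemma sq1_pos [simp]: "(u::real)\<^sup>2 + 1 \<noteq> 0" "\<not> (u::real)\<^sup>2 + 1 < 0"
  by (smt (verit) zero_le_power2)+

lemma pos_integral_aux:
  fixes F :: "real \<Rightarrow> real"
  assumes c: "continuous_on {0..} F" and nn: "\<And>u. u \<ge> 0 \<Longrightarrow> F u \<ge> 0"
    and i: "F integrable_on {0..}" and p: "F 1 > 0"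
  shows "integral {0..} F > 0"
proof -
  have c1: "continuous_on {0..1} F" using c by (rule continuous_on_subset) auto
  have ne: "integral {0..1} F \<noteq> 0"
    using integral_eq_0_iff[OF c1, of] nn p by auto
  have ge: "integral {0..1} F \<ge> 0"
    by (rule integral_nonneg) (auto intro: integrable_continuous_interval c1 nn)
  have "integral {0..1} F \<le> integral {0..} F"
    by (rule integral_subset_le) (auto intro: integrable_continuous_interval c1 nn i)
  then show ?thesis using ne ge by linarith
qed

lemma exp_int: "t > 0 \<Longrightarrow> ((\<lambda>u. exp (- t * u)) has_integral 1 / t) {0::real..}"
  using has_integral_exp_minus_to_infinity[of t 0] by simp

lemma M_int:
  assumes "t > 0"
  shows "(\<lambda>u. exp (- t * u) / sqrt (u\<^sup>2 + 1)) integrable_on {0::real..}"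
proof (rule measurable_bounded_by_integrable_imp_integrable_real)
  show "(\<lambda>u. exp (- t * u) / sqrt (u\<^sup>2 + 1)) \<in> borel_measurable (lebesgue_on {0..})"
    by (rule continuous_imp_measurable_on_sets_lebesgue) (auto intro!: continuous_intros simp: add_pos_nonneg)
  show "(\<lambda>u. exp (- t * u)) integrable_on {0..}" using exp_int[OF assms] by blast
  show "\<bar>exp (- t * u) / sqrt (u\<^sup>2 + 1)\<bar> \<le> exp (- t * u)" if "u \<in> {0..}" for u
  proof -
    have "sqrt (u\<^sup>2 + 1) \<ge> 1" by simp
    then show ?thesis by (simp add: divide_le_eq)
  qed
qed auto

definition G :: "real \<Rightarrow> real" where "G u = 1 - 1 / sqrt (u\<^sup>2 + 1)"

lemma G_nonneg: "G u \<ge> 0"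
  unfolding G_def by (simp add: divide_le_eq)

lemma G_1: "G 1 > 0"
  unfolding G_def by (simp add: divide_less_eq)

lemma G_cont: "continuous_on S G"
  unfolding G_def by (auto intro!: continuous_intros simp: add_pos_nonneg)

lemma rep:
  assumes "t > 0"
  shows "((\<lambda>u. exp (- t * u) * G u) has_integral (1 / t - M t)) {0..}"
proof -
  have "((\<lambda>u. exp (- t * u) - exp (- t * u) / sqrt (u\<^sup>2 + 1)) has_integral (1 / t - M t)) {0..}"
    unfolding M_def
    by (intro has_integral_diff exp_int assms integrable_integral M_int)
  then show ?thesis by (simp add: G_def algebra_simps)
qed

theorem proposition2:
  shows "(\<forall>t>0. 1 / t - M t > 0) \<and>
         (\<forall>s t. 0 < s \<longrightarrow> s < t \<longrightarrow> 1 / t - M t < 1 / s - M s)"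
proof safe
  fix t :: real assume t: "t > 0"
  have "integral {0..} (\<lambda>u. exp (- t * u) * G u) > 0"
    using rep[OF t] G_1 G_nonneg
    by (intro pos_integral_aux) (auto intro!: continuous_intros G_cont)
  then show "1 / t - M t > 0" using rep[OF t] by (simp add: integral_unique)
next
  fix s t :: real assume s: "0 < s" and st: "s < t"
  have t: "t > 0" using s st by simp
  have hi: "((\<lambda>u. exp (- s * u) * G u - exp (- t * u) * G u) has_integral
      ((1 / s - M s) - (1 / t - M t))) {0..}"
    by (intro has_integral_diff rep s t)
  have "integral {0..} (\<lambda>u. exp (- s * u) * G u - exp (- t * u) * G u) > 0"
  proof (rule pos_integral_aux)
    show "continuous_on {0..} (\<lambda>u. exp (- s * u) * G u - exp (- t * u) * G u)"
      by (auto intro!: continuous_intros G_cont)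
    show "(\<lambda>u. exp (- s * u) * G u - exp (- t * u) * G u) integrable_on {0..}"
      using hi by blast
    show "0 \<le> exp (- s * u) * G u - exp (- t * u) * G u" if "u \<ge> 0" for u
    proof -
      have "exp (- t * u) \<le> exp (- s * u)" using that st by (simp add: mult_right_mono)
      then show ?thesis using G_nonneg[of u] by (simp add: mult_right_mono flip: left_diff_distrib)
    qed
    show "0 < exp (- s * 1) * G 1 - exp (- t * 1) * G 1"
      using G_1 st by (simp add: flip: left_diff_distrib)
  qed
  then show "1 / t - M t < 1 / s - M s" using hi by (simp add: integral_unique)
qed

end
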